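(* Let $k>0$ and consider the system of ODEs, for $r>0$, $\theta$, $z$, $p_R$, $p_S$ real, \[ \dot r = p_R,\quad \dot\theta = \frac{p_S}{r^2},\quad \dot z = \frac{p_S}{2},\quad \dot p_R = \frac{p_S^2}{r^3} - \frac{2kr^3}{(r^4+16z^2)^{3/2}},\quad \dot p_S = -\frac{8kr^2 z}{(r^4+16z^2)^{3/2}}. \] This system does not admit any (non-constant) first integral that is linear in the momenta, i.e. of the form $F = f(r,\theta,z)\,p_R + g(r,\theta,z)\,p_S + h(r,\theta,z)$ with smooth coefficients.
   Context: A first integral is a function of $(r,\theta,z,p_R,p_S)$ constant along all solutions. The system describes nonholonomic motion on the Heisenberg group in the potential $-k/\sqrt{r^4+16z^2}$ in cylindrical coordinates. *)

theory Defs
  imports "HOL-Analysis.Analysis"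
begin

text \<open>C-infinity functions on an open set S of a Euclidean space: f belongs to a
  family of functions, each of which is (Frechet) differentiable on S and whose
  partial derivatives in every basis direction again lie in the family.\<close>
definition smooth_on :: "('a::euclidean_space) set \<Rightarrow> ('a \<Rightarrow> real) \<Rightarrow> bool" where
  "smooth_on S f \<longleftrightarrow>
     (\<exists>Fam. f \<in> Fam \<and>
        (\<forall>g\<in>Fam. \<exists>G. (\<forall>x\<in>S. (g has_derivative G x) (at x)) \<and>
                       (\<forall>b\<in>Basis. (\<lambda>x. G x b) \<in> Fam)))"

type_synonym state = "real \<times> real \<times> real \<times> real \<times> real"
  \<comment> \<open>(r, theta, z, p_R, p_S)\<close>

definition phase_space :: "state set" where
  "phase_space = {(r, \<theta>, z, pR, pS). r > 0}"

definition heis_field :: "real \<Rightarrow> state \<Rightarrow> state" where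
  "heis_field k = (\<lambda>(r, \<theta>, z, pR, pS).
     (pR,
      pS / r\<^sup>2,
      pS / 2,
      pS\<^sup>2 / r ^ 3 - 2 * k * r ^ 3 / (r ^ 4 + 16 * z\<^sup>2) powr (3/2),
      - 8 * k * r\<^sup>2 * z / (r ^ 4 + 16 * z\<^sup>2) powr (3/2)))"

definition is_solution :: "real \<Rightarrow> (real \<Rightarrow> state) \<Rightarrow> real set \<Rightarrow> bool" where
  "is_solution k x I \<longleftrightarrow>
     (\<forall>t\<in>I. x t \<in> phase_space \<and> (x has_vector_derivative heis_field k (x t)) (at t))"

definition first_integral :: "real \<Rightarrow> (state \<Rightarrow> real) \<Rightarrow> bool" where
  "first_integral k F \<longleftrightarrow>
     (\<forall>x a b. a < b \<longrightarrow> is_solution k x {a<..<b} \<longrightarrow>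
        (\<forall>s\<in>{a<..<b}. \<forall>t\<in>{a<..<b}. F (x s) = F (x t)))"

definition config_space :: "(real \<times> real \<times> real) set" where
  "config_space = {(r, \<theta>, z). r > 0}"

definition linear_in_momenta ::
  "(real \<times> real \<times> real \<Rightarrow> real) \<Rightarrow> (real \<times> real \<times> real \<Rightarrow> real) \<Rightarrow>
   (real \<times> real \<times> real \<Rightarrow> real) \<Rightarrow> state \<Rightarrow> real" where
  "linear_in_momenta f g h = (\<lambda>(r, \<theta>, z, pR, pS).
     f (r, \<theta>, z) * pR + g (r, \<theta>, z) * pS + h (r, \<theta>, z))"

end

theory Submission
  imports Defs
begin


lemma picard_local:
  fixes V :: "'a::euclidean_space \<Rightarrow> 'a"
  assumes u: "0 < u" and lip: "L-lipschitz_on (cball p u) V"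
  shows "\<exists>e>0. \<exists>x. x 0 = p \<and> (\<forall>t\<in>{-e<..<e}. x t \<in> cball p u \<and> (x has_vector_derivative V (x t)) (at t))"
proof -
  have L0: "0 \<le> L" using lip lipschitz_on_nonneg by blast
  have contV: "continuous_on (cball p u) V" using lip by (rule lipschitz_on_continuous_on)
  have "compact (V ` cball p u)" by (intro compact_continuous_image contV compact_cball)
  then obtain M where M: "M > 0" "\<And>y. y \<in> cball p u \<Longrightarrow> norm (V y) \<le> M"
    by (auto dest!: compact_imp_bounded simp: bounded_pos)
  define e where "e = min (u / (4 * M)) (1 / (8 * (L + 1)))"
  have e0: "e > 0" using u M L0 by (simp add: e_def)
  have eM: "4 * e * M \<le> u"
  proof -
    have "e \<le> u / (4 * M)" by (simp add: e_def)
    then show ?thesis using M by (simp add: field_simps)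
  qed
  have eL: "4 * e * L \<le> 1/2"
  proof -
    have "e \<le> 1 / (8 * (L + 1))" by (simp add: e_def)
    then have "e * (8 * (L + 1)) \<le> 1" using L0 by (simp add: field_simps)
    then show ?thesis using L0 e0 by (simp add: algebra_simps)
  qed
  define cl where "cl t = max (-e) (min e t)" for t
  have cl_in: "cl t \<in> {-e..e}" for t using e0 by (auto simp: cl_def)
  have cl_id: "t \<in> {-e..e} \<Longrightarrow> cl t = t" for t by (auto simp: cl_def)
  have cont_cl: "continuous_on UNIV cl" unfolding cl_def by (intro continuous_intros)
  define S :: "(real \<Rightarrow>\<^sub>C 'a) set" where "S = PiC UNIV (\<lambda>_. cball p u)"
  have S_iff: "y \<in> S \<longleftrightarrow> (\<forall>t. apply_bcontfun y t \<in> cball p u)" for y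
    by (auto simp: S_def mem_PiC_iff)
  have "closed S" unfolding S_def by (intro closed_PiC) auto
  then have cS: "complete S" by (simp add: complete_eq_closed)
  define Q where "Q y t = p + integral {-e..cl t} (\<lambda>s. V (apply_bcontfun y s)) - integral {-e..0} (\<lambda>s. V (apply_bcontfun y s))" for y t
  have contVy: "continuous_on {-e..e} (\<lambda>s. V (apply_bcontfun y s))" if "y \<in> S" for y
    using that by (intro continuous_on_compose2[OF contV]) (auto simp: S_iff)
  have bnd: "norm (integral {-e..c} (\<lambda>s. V (apply_bcontfun y s))) \<le> M * (c + e)"
    if "y \<in> S" "c \<in> {-e..e}" for y c
  proof -
    have "norm (integral {-e..c} (\<lambda>s. V (apply_bcontfun y s))) \<le> M * (c - (-e))"
      using that by (intro integral_bound)
        (auto intro: continuous_on_subset[OF contVy] M simp: S_iff)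
    then show ?thesis by simp
  qed
  have Q_ball: "Q y t \<in> cball p u" if "y \<in> S" for y t
  proof -
    have "norm (integral {-e..cl t} (\<lambda>s. V (apply_bcontfun y s))) \<le> M * (cl t + e)"
      using bnd[OF that cl_in] .
    moreover have "norm (integral {-e..0} (\<lambda>s. V (apply_bcontfun y s))) \<le> M * (0 + e)"
      using bnd[OF that, of 0] e0 by simp
    moreover have "M * (cl t + e) \<le> M * (2*e)" using cl_in[of t] M by (intro mult_left_mono) auto
    ultimately have a1: "norm (integral {-e..cl t} (\<lambda>s. V (apply_bcontfun y s))) \<le> 2*(e*M)"
      and a2: "norm (integral {-e..0} (\<lambda>s. V (apply_bcontfun y s))) \<le> e*M"
      by (simp_all add: algebra_simps)
    have "norm (integral {-e..cl t} (\<lambda>s. V (apply_bcontfun y s)) - integral {-e..0} (\<lambda>s. V (apply_bcontfun y s))) \<le> 3*(e*M)"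
      using a1 a2 norm_triangle_ineq4[of "integral {-e..cl t} (\<lambda>s. V (apply_bcontfun y s))" "integral {-e..0} (\<lambda>s. V (apply_bcontfun y s))"]
      by linarith
    moreover have "3*(e*M) \<le> u"
    proof -
      have "0 < e*M" using e0 M(1) by simp
      moreover have "4*(e*M) \<le> u" using eM by (simp add: mult.assoc)
      ultimately show ?thesis by linarith
    qed
    ultimately have "norm (integral {-e..cl t} (\<lambda>s. V (apply_bcontfun y s)) - integral {-e..0} (\<lambda>s. V (apply_bcontfun y s))) \<le> u"
      by linarith
    then show ?thesis by (simp add: Q_def dist_norm norm_minus_commute)
  qed
  have Q_bc: "Q y \<in> bcontfun" if "y \<in> S" for y
  proof (rule bcontfun_normI)
    have "continuous_on {-e..e} (\<lambda>c. integral {-e..c} (\<lambda>s. V (apply_bcontfun y s)))"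
      by (intro indefinite_integral_continuous_1 integrable_continuous_real contVy that)
    then have "continuous_on UNIV (\<lambda>t. integral {-e..cl t} (\<lambda>s. V (apply_bcontfun y s)))"
      by (rule continuous_on_compose2[OF _ cont_cl]) (use cl_in in auto)
    then show "continuous_on UNIV (Q y)" unfolding Q_def by (intro continuous_intros)
    fix t
    have "dist p (Q y t) \<le> u" using Q_ball[OF that] by simp
    then show "norm (Q y t) \<le> norm p + u"
      using norm_triangle_ineq2[of "Q y t" p] by (simp add: dist_norm norm_minus_commute)
  qed
  define P where "P y = Bcontfun (Q y)" for y
  have P_app: "apply_bcontfun (P y) = Q y" if "y \<in> S" for y
    using Q_bc[OF that] by (simp add: P_def Bcontfun_inverse)
  have PS: "P ` S \<subseteq> S" using P_app Q_ball by (auto simp: S_iff)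
  have Sne: "S \<noteq> {}"
  proof -
    have "Bcontfun (\<lambda>_. p) \<in> S" using const_bcontfun[of p] u
      by (simp add: S_iff Bcontfun_inverse[OF const_bcontfun])
    then show ?thesis by blast
  qed
  have contr: "dist (P y) (P z) \<le> (1/2) * dist y z" if "y \<in> S" "z \<in> S" for y z
  proof (rule dist_bound)
    fix t
    define d where "d = dist y z"
    have D: "norm (integral {-e..c} (\<lambda>s. V (apply_bcontfun y s)) - integral {-e..c} (\<lambda>s. V (apply_bcontfun z s))) \<le> (L * d) * (c + e)"
      if c: "c \<in> {-e..e}" for c
    proof -
      have "integral {-e..c} (\<lambda>s. V (apply_bcontfun y s)) - integral {-e..c} (\<lambda>s. V (apply_bcontfun z s))
          = integral {-e..c} (\<lambda>s. V (apply_bcontfun y s) - V (apply_bcontfun z s))"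
        using c by (intro integral_diff[symmetric] integrable_continuous_real continuous_on_subset[OF contVy] \<open>y \<in> S\<close> \<open>z \<in> S\<close>) auto
      also have "norm \<dots> \<le> (L * d) * (c - (-e))"
      proof (rule integral_bound)
        show "-e \<le> c" using c by auto
        show "continuous_on {-e..c} (\<lambda>s. V (apply_bcontfun y s) - V (apply_bcontfun z s))"
          using c by (intro continuous_intros continuous_on_subset[OF contVy] \<open>y \<in> S\<close> \<open>z \<in> S\<close>) auto
        fix s
        have "dist (V (apply_bcontfun y s)) (V (apply_bcontfun z s)) \<le> L * dist (apply_bcontfun y s) (apply_bcontfun z s)"
          using that lip \<open>y \<in> S\<close> \<open>z \<in> S\<close> by (intro lipschitz_onD[OF lip]) (auto simp: S_iff)
        also have "\<dots> \<le> L * d" unfolding d_def by (intro mult_left_mono dist_bounded L0)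
        finally show "norm (V (apply_bcontfun y s) - V (apply_bcontfun z s)) \<le> L * d" by (simp add: dist_norm)
      qed
      finally show ?thesis by simp
    qed
    have d0: "0 \<le> d" by (simp add: d_def)
    have A: "norm (integral {-e..cl t} (\<lambda>s. V (apply_bcontfun y s)) - integral {-e..cl t} (\<lambda>s. V (apply_bcontfun z s))) \<le> (L*d) * (2*e)"
      using D[OF cl_in[of t]] cl_in[of t] L0 d0 mult_left_mono[of "cl t + e" "2*e" "L*d"] by auto
    have B: "norm (integral {-e..0} (\<lambda>s. V (apply_bcontfun y s)) - integral {-e..0} (\<lambda>s. V (apply_bcontfun z s))) \<le> (L*d) * (2*e)"
    proof -
      have B0: "norm (integral {-e..0} (\<lambda>s. V (apply_bcontfun y s)) - integral {-e..0} (\<lambda>s. V (apply_bcontfun z s))) \<le> (L*d)*e"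
        using D[of 0] e0 by simp
      have "0 \<le> (L*d)*e" using L0 d0 e0 by simp
      moreover have "(L*d)*(2*e) = 2*((L*d)*e)" by simp
      ultimately show ?thesis using B0 by linarith
    qed
    have "dist (Q y t) (Q z t) = norm ((integral {-e..cl t} (\<lambda>s. V (apply_bcontfun y s)) - integral {-e..cl t} (\<lambda>s. V (apply_bcontfun z s)))
       - (integral {-e..0} (\<lambda>s. V (apply_bcontfun y s)) - integral {-e..0} (\<lambda>s. V (apply_bcontfun z s))))"
      by (simp add: Q_def dist_norm algebra_simps)
    also have "\<dots> \<le> (L*d) * (2*e) + (L*d) * (2*e)"
      using A B norm_triangle_ineq4[of "integral {-e..cl t} (\<lambda>s. V (apply_bcontfun y s)) - integral {-e..cl t} (\<lambda>s. V (apply_bcontfun z s))" "integral {-e..0} (\<lambda>s. V (apply_bcontfun y s)) - integral {-e..0} (\<lambda>s. V (apply_bcontfun z s))"] by linarith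
    also have "\<dots> = (4*e*L) * d" by (simp add: algebra_simps)
    also have "\<dots> \<le> (1/2) * d" using eL d0 by (intro mult_right_mono) auto
    finally show "dist (apply_bcontfun (P y) t) (apply_bcontfun (P z) t) \<le> (1/2) * dist y z"
      using P_app[OF \<open>y \<in> S\<close>] P_app[OF \<open>z \<in> S\<close>] by (simp add: d_def)
  qed
  obtain x where xS: "x \<in> S" and fix_x: "P x = x"
    using Banach_fix[OF cS Sne _ _ PS, of "1/2"] contr by auto
  have xQ: "apply_bcontfun x t = Q x t" for t using P_app[OF xS] fix_x by metis
  show ?thesis
  proof (intro exI[of _ e] conjI e0 exI[of _ "apply_bcontfun x"] ballI)
    show "apply_bcontfun x 0 = p" using cl_id[of 0] e0 by (subst xQ) (simp add: Q_def)
    fix t assume t: "t \<in> {-e<..<e}"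
    show "apply_bcontfun x t \<in> cball p u" using xS by (simp add: S_iff)
    have "((\<lambda>c. integral {-e..c} (\<lambda>s. V (apply_bcontfun x s))) has_vector_derivative V (apply_bcontfun x t)) (at t within {-e..e})"
      using t by (intro integral_has_vector_derivative contVy xS) auto
    then have "((\<lambda>c. p + integral {-e..c} (\<lambda>s. V (apply_bcontfun x s)) - integral {-e..0} (\<lambda>s. V (apply_bcontfun x s))) has_vector_derivative V (apply_bcontfun x t)) (at t within {-e..e})"
      by (intro derivative_eq_intros) auto
    then have "(apply_bcontfun x has_vector_derivative V (apply_bcontfun x t)) (at t within {-e..e})"
    proof (rule has_vector_derivative_transform[rotated 2])
      show "t \<in> {-e..e}" using t by auto
      fix s assume s: "s \<in> {-e..e}"
      show "apply_bcontfun x s = p + integral {-e..s} (\<lambda>s. V (apply_bcontfun x s)) - integral {-e..0} (\<lambda>s. V (apply_bcontfun x s))"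
        by (subst xQ) (simp add: Q_def cl_id[OF s])
    qed
    then show "(apply_bcontfun x has_vector_derivative V (apply_bcontfun x t)) (at t)"
      using t by (simp add: at_within_Icc_at)
  qed
qed



definition Wf :: "real \<Rightarrow> real \<Rightarrow> real" where "Wf r z = r ^ 4 + 16 * z\<^sup>2"

lemma Wf_deriv:
  assumes "(f has_derivative f') (at x within s)" "(g has_derivative g') (at x within s)"
    and "D = (\<lambda>h. 4 * f x ^ 3 * f' h + 32 * g x * g' h)"
  shows "((\<lambda>x. Wf (f x) (g x)) has_derivative D) (at x within s)"
  unfolding Wf_def assms(3)
  by (rule derivative_eq_intros assms(1,2) refl)+ (simp add: algebra_simps power2_eq_square power3_eq_cube)

lemma W_pos_aux: "(r::real) > 0 \<Longrightarrow> r ^ 4 + 16 * z\<^sup>2 \<noteq> 0"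
  by (smt (verit) zero_less_power zero_le_power2)

lemma Wf_pos: "(r::real) > 0 \<Longrightarrow> Wf r z > 0"
  by (simp add: Wf_def add_pos_nonneg)
lemma Wf_ne: "(r::real) > 0 \<Longrightarrow> Wf r z \<noteq> 0"
  using Wf_pos[of r z] by linarith
lemma Q_pos: "(r::real) > 0 \<Longrightarrow> Wf r z powr (3/2) > 0"
  using Wf_pos[of r z] by simp
lemma Q_ne: "(r::real) > 0 \<Longrightarrow> Wf r z powr (3/2) \<noteq> 0"
  using Q_pos[of r z] by linarith

definition HF :: "real \<Rightarrow> state \<Rightarrow> state" where
  "HF k x = (let r = fst x; z = fst (snd (snd x)); pR = fst (snd (snd (snd x))); pS = snd (snd (snd (snd x)));
      Q = Wf r z powr (3/2) in
     (pR, pS / r\<^sup>2, pS / 2, pS\<^sup>2 / r ^ 3 - 2 * k * r ^ 3 / Q, - 8 * k * r\<^sup>2 * z / Q))"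

lemma heis_HF: "heis_field k = HF k"
  by (auto simp: heis_field_def HF_def fun_eq_iff Let_def Wf_def)

definition DH :: "real \<Rightarrow> state \<Rightarrow> state \<Rightarrow> state" where
  "DH k x h = (let r = fst x; z = fst (snd (snd x)); pR = fst (snd (snd (snd x))); pS = snd (snd (snd (snd x)));
      a = fst h; c = fst (snd (snd h)); d = fst (snd (snd (snd h))); e = snd (snd (snd (snd h)));
      W = Wf r z; Q = W powr (3/2); Wd = 4 * r^3 * a + 32 * z * c; Qd = Q * (3/2) * Wd / W in
     (d, e / r\<^sup>2 - 2 * pS * a / r^3, e / 2,
      2 * pS * e / r^3 - 3 * pS\<^sup>2 * a / r^4 - 2 * k * (3 * r\<^sup>2 * a * Q - r^3 * Qd) / Q\<^sup>2,
      - 8 * k * ((2 * r * a * z + r\<^sup>2 * c) * Q - r\<^sup>2 * z * Qd) / Q\<^sup>2))"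

lemma HF_deriv0: "r > 0 \<Longrightarrow> (HF k has_derivative DH k (r,th,z,pR,pS)) (at (r,th,z,pR,pS))"
  unfolding HF_def[abs_def] Let_def
  apply (rule derivative_eq_intros Wf_deriv refl | (simp add: Wf_pos Wf_ne Q_ne; fail))+
  apply (clarsimp simp: fun_eq_iff DH_def Let_def)
  apply (intro conjI)
  using Q_ne[of r z] Wf_ne[of r z]
  apply (simp_all add: field_simps power2_eq_square)
  apply (simp_all add: eval_nat_numeral)
  done

lemma HF_deriv: "fst x > 0 \<Longrightarrow> (HF k has_derivative DH k x) (at x)"
  by (cases x) (auto intro: HF_deriv0)

lemma mem_phase: "x \<in> phase_space \<longleftrightarrow> fst x > 0"
  by (cases x) (simp add: phase_space_def)

lemma open_phase: "open phase_space"
proof -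
  have "phase_space = {x. 0 < fst x}" using mem_phase by blast
  moreover have "open {x::state. 0 < fst x}" by (intro open_Collect_less continuous_intros)
  ultimately show ?thesis by simp
qed

lemma DH_cont: "continuous_on phase_space (\<lambda>x. DH k x h)"
  unfolding DH_def Let_def Wf_def
  by (intro continuous_intros) (auto simp: mem_phase add_pos_nonneg W_pos_aux)

lemma HF_loclip: "local_lipschitz (UNIV::real set) phase_space (\<lambda>_. HF k)"
proof (rule c1_implies_local_lipschitz[where f'="\<lambda>tx. Blinfun (DH k (snd tx))"])
  fix t and x :: state assume "x \<in> phase_space"
  then have d: "(HF k has_derivative DH k x) (at x)" by (intro HF_deriv) (simp add: mem_phase)
  then have "bounded_linear (DH k x)" by (rule has_derivative_bounded_linear)
  then show "(HF k has_derivative blinfun_apply (Blinfun (DH k (snd (t, x))))) (at x)"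
    using d by (simp add: bounded_linear_Blinfun_apply)
next
  have "continuous_on ((UNIV::real set) \<times> phase_space) (\<lambda>tx. blinfun_of_matrix (\<lambda>i j. DH k (snd tx) j \<bullet> i))"
    by (intro continuous_intros continuous_on_compose2[OF DH_cont]) auto
  moreover have "\<And>tx::real\<times>state. tx \<in> UNIV \<times> phase_space \<Longrightarrow> Blinfun (DH k (snd tx)) = blinfun_of_matrix (\<lambda>i j. DH k (snd tx) j \<bullet> i)"
  proof -
    fix tx :: "real \<times> state" assume "tx \<in> UNIV \<times> phase_space"
    then have "(HF k has_derivative DH k (snd tx)) (at (snd tx))" by (intro HF_deriv) (auto simp: mem_phase)
    then have "bounded_linear (DH k (snd tx))" by (rule has_derivative_bounded_linear)
    then show "Blinfun (DH k (snd tx)) = blinfun_of_matrix (\<lambda>i j. DH k (snd tx) j \<bullet> i)"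
      by (rule Blinfun_eq_matrix)
  qed
  ultimately show "continuous_on ((UNIV::real set) \<times> phase_space) (\<lambda>tx. Blinfun (DH k (snd tx)))"
    using continuous_on_cong by (smt (verit))
qed (auto simp: open_phase)



lemma sol_exists:
  assumes "p \<in> phase_space"
  shows "\<exists>e>0. \<exists>x. x 0 = p \<and> is_solution k x {-e<..<e}"
proof -
  obtain u L where u: "u > 0" and L: "\<And>s::real. s \<in> cball 0 u \<inter> UNIV \<Longrightarrow> L-lipschitz_on (cball p u \<inter> phase_space) (HF k)"
    by (rule local_lipschitzE[OF HF_loclip[of k] UNIV_I[of 0] assms]) iprover
  obtain u' where u': "u' > 0" "cball p u' \<subseteq> phase_space"
    using open_phase assms open_contains_cball by blast
  define v where "v = min u u'"
  have v: "v > 0" using u u' by (simp add: v_def)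
  have sub: "cball p v \<subseteq> phase_space" using u' by (auto simp: v_def)
  have "L-lipschitz_on (cball p v) (HF k)"
    by (rule lipschitz_on_subset[OF L[of 0]]) (use u sub in \<open>auto simp: v_def\<close>)
  from picard_local[OF v this] obtain e x where e: "e > 0" "x 0 = p"
    and x: "\<And>t. t \<in> {-e<..<e} \<Longrightarrow> x t \<in> cball p v \<and> (x has_vector_derivative HF k (x t)) (at t)"
    by blast
  have "is_solution k x {-e<..<e}"
    unfolding is_solution_def
  proof
    fix t assume t: "t \<in> {-e<..<e}"
    from x[OF t] have xt: "x t \<in> cball p v" and d: "(x has_vector_derivative HF k (x t)) (at t)" by auto
    from xt sub have "x t \<in> phase_space" by blast
    then show "x t \<in> phase_space \<and> (x has_vector_derivative heis_field k (x t)) (at t)"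
      using d by (simp add: heis_HF)
  qed
  then show ?thesis using e by blast
qed

lemma smooth_deriv: "smooth_on S f \<Longrightarrow> \<exists>D. \<forall>x\<in>S. (f has_derivative D x) (at x)"
  unfolding smooth_on_def by blast

definition prj :: "state \<Rightarrow> real \<times> real \<times> real" where
  "prj s = (fst s, fst (snd s), fst (snd (snd s)))"

lemma prj_deriv: "(prj has_derivative prj) (at s)"
  unfolding prj_def[abs_def] by (rule derivative_eq_intros refl)+

lemma lim_eq: "linear_in_momenta f g h =
  (\<lambda>s. f (prj s) * fst (snd (snd (snd s))) + g (prj s) * snd (snd (snd (snd s))) + h (prj s))"
  by (auto simp: fun_eq_iff linear_in_momenta_def prj_def)

lemma key_identity:
  assumes fi: "first_integral k (linear_in_momenta f g h)"
    and Df: "\<And>q. q \<in> config_space \<Longrightarrow> (f has_derivative Df q) (at q)"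
    and Dg: "\<And>q. q \<in> config_space \<Longrightarrow> (g has_derivative Dg q) (at q)"
    and Dh: "\<And>q. q \<in> config_space \<Longrightarrow> (h has_derivative Dh q) (at q)"
    and p: "p \<in> phase_space"
  shows "Df (prj p) (prj (heis_field k p)) * fst (snd (snd (snd p))) + f (prj p) * fst (snd (snd (snd (heis_field k p))))
       + (Dg (prj p) (prj (heis_field k p)) * snd (snd (snd (snd p))) + g (prj p) * snd (snd (snd (snd (heis_field k p)))))
       + Dh (prj p) (prj (heis_field k p)) = 0"
proof -
  define F where "F = linear_in_momenta f g h"
  have q: "prj p \<in> config_space" using p by (cases p) (auto simp: prj_def config_space_def phase_space_def)
  define DF where "DF = (\<lambda>v. Df (prj p) (prj v) * fst (snd (snd (snd p))) + f (prj p) * fst (snd (snd (snd v)))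
       + (Dg (prj p) (prj v) * snd (snd (snd (snd p))) + g (prj p) * snd (snd (snd (snd v))))
       + Dh (prj p) (prj v))"
  have f1: "((\<lambda>s. f (prj s)) has_derivative (\<lambda>v. Df (prj p) (prj v))) (at p)"
    by (rule has_derivative_compose[OF prj_deriv Df[OF q]])
  have g1: "((\<lambda>s. g (prj s)) has_derivative (\<lambda>v. Dg (prj p) (prj v))) (at p)"
    by (rule has_derivative_compose[OF prj_deriv Dg[OF q]])
  have h1: "((\<lambda>s. h (prj s)) has_derivative (\<lambda>v. Dh (prj p) (prj v))) (at p)"
    by (rule has_derivative_compose[OF prj_deriv Dh[OF q]])
  have FD: "(F has_derivative DF) (at p)"
    unfolding F_def lim_eq DF_def
    by (rule derivative_eq_intros f1 g1 h1 refl)+ (simp add: fun_eq_iff algebra_simps)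
  have linDF: "linear DF" using FD by (rule has_derivative_linear)
  obtain e x where e: "e > 0" "x 0 = p" and sol: "is_solution k x {-e<..<e}"
    using sol_exists[OF p] by blast
  have xd: "(x has_derivative (\<lambda>t. t *\<^sub>R heis_field k p)) (at 0)"
    using sol e unfolding is_solution_def has_vector_derivative_def by force
  have comp: "((\<lambda>t. F (x t)) has_derivative (\<lambda>t. DF (t *\<^sub>R heis_field k p))) (at 0)"
    using has_derivative_compose[OF xd, of F DF] FD e by simp
  have const: "F (x t) = F p" if "t \<in> {-e<..<e}" for t
  proof -
    have ee: "-e < e" using e by simp
    have z: "0 \<in> {-e<..<e}" using e by simp
    have "\<forall>s\<in>{-e<..<e}. \<forall>t\<in>{-e<..<e}. F (x s) = F (x t)"
      using fi ee sol unfolding first_integral_def F_def by blast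
    then show ?thesis using that z e(2) by blast
  qed
  have "((\<lambda>t. F p) has_derivative (\<lambda>t. DF (t *\<^sub>R heis_field k p))) (at 0)"
    by (rule has_derivative_transform_within_open[OF comp, of "{-e<..<e}"]) (use e const in auto)
  moreover have "((\<lambda>t. F p) has_derivative (\<lambda>t. 0)) (at 0)" by (rule has_derivative_const)
  ultimately have "(\<lambda>t. DF (t *\<^sub>R heis_field k p)) = (\<lambda>t. 0)" by (rule has_derivative_unique)
  then have "DF (1 *\<^sub>R heis_field k p) = 0" by metis
  then show ?thesis by (simp add: DF_def)
qed



lemma lin3:
  assumes l: "linear (L::real\<times>real\<times>real\<Rightarrow>real)"
  shows "L (a, b, c) = a * L (1,0,0) + b * L (0,1,0) + c * L (0,0,1::real)"
proof -
  have "L (a,b,c) = L (a *\<^sub>R (1,0,0) + b *\<^sub>R (0,1,0) + c *\<^sub>R (0,0,1::real))" by simp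
  also have "\<dots> = a * L (1,0,0) + b * L (0,1,0) + c * L (0,0,1::real)"
    by (simp only: linear_add[OF l] linear_cmul[OF l] real_scaleR_def)
  finally show ?thesis .
qed

lemma poly_extract:
  fixes fr ft fz f gr gt gz g hr ht hz r k Q z :: real
  assumes E: "\<And>x y. (x*fr + (y/r\<^sup>2)*ft + (y/2)*fz)*x + f*(y\<^sup>2/r^3 - 2*k*r^3/Q)
      + ((x*gr + (y/r\<^sup>2)*gt + (y/2)*gz)*y + g*(- 8*k*r\<^sup>2*z/Q)) + (x*hr + (y/r\<^sup>2)*ht + (y/2)*hz) = 0"
    and k: "k > 0" and r: "r > 0" and Q: "Q > 0"
  shows "r * f + 4 * z * g = 0" "fr = 0" "hr = 0" "ht / r\<^sup>2 + hz / 2 = 0" "ft / r\<^sup>2 + fz / 2 + gr = 0"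
proof -
  define C where "C = f*(- 2*k*r^3/Q) + g*(- 8*k*r\<^sup>2*z/Q)"
  define A where "A = f / r^3 + gt / r\<^sup>2 + gz / 2"
  have E00: "C = 0" using E[of 0 0] by (simp add: C_def)
  have E10: "fr + C + hr = 0" using E[of 1 0] by (simp add: C_def algebra_simps)
  have E20: "fr - hr + C = 0" using E[of "-1" 0] by (simp add: C_def algebra_simps)
  have E01: "A + C + (ht / r\<^sup>2 + hz / 2) = 0" using E[of 0 1] by (simp add: C_def A_def algebra_simps)
  have E02: "A + C - (ht / r\<^sup>2 + hz / 2) = 0" using E[of 0 "-1"] by (simp add: C_def A_def algebra_simps power2_eq_square)
  have E11: "fr + (ft / r\<^sup>2 + fz / 2 + gr) + A + C + hr + (ht / r\<^sup>2 + hz / 2) = 0"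
    using E[of 1 1] by (simp add: C_def A_def algebra_simps)
  show "fr = 0" "hr = 0" "ht / r\<^sup>2 + hz / 2 = 0" "ft / r\<^sup>2 + fz / 2 + gr = 0"
    using E00 E10 E20 E01 E02 E11 by linarith+
  have "C * Q = - (2 * k * r\<^sup>2) * (r * f + 4 * z * g)" using Q
    by (simp add: C_def field_simps power2_eq_square power3_eq_cube)
  then have "(2 * k * r\<^sup>2) * (r * f + 4 * z * g) = 0" using E00 by simp
  then show "r * f + 4 * z * g = 0" using k r by simp
qed



lemma line_deriv:
  fixes \<phi> :: "'a::real_normed_vector \<Rightarrow> real"
  assumes "(\<phi> has_derivative D) (at (q0 + s *\<^sub>R w))"
  shows "((\<lambda>s. \<phi> (q0 + s *\<^sub>R w)) has_real_derivative D w) (at s)"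
proof -
  have l: "((\<lambda>s. q0 + s *\<^sub>R w) has_derivative (\<lambda>t. t *\<^sub>R w)) (at s)"
    by (rule derivative_eq_intros refl)+ simp
  have lin: "linear D" using assms by (rule has_derivative_linear)
  have "((\<lambda>s. \<phi> (q0 + s *\<^sub>R w)) has_derivative (\<lambda>t. D (t *\<^sub>R w))) (at s)"
    by (rule has_derivative_compose[OF l assms])
  moreover have "(\<lambda>t. D (t *\<^sub>R w)) = (*) (D w)"
    using lin by (auto simp: fun_eq_iff linear_cmul)
  ultimately show ?thesis by (simp add: has_field_derivative_def)
qed

lemma ode_aux:
  fixes u u' :: "real \<Rightarrow> real"
  assumes D: "\<And>z. (u has_real_derivative u' z) (at z)"
    and E: "\<And>z. z \<noteq> 0 \<Longrightarrow> 2 * z * u' z = u z"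
    and u0: "u 0 = 0"
    and S: "convex S" "0 \<notin> S" "\<not> trivial_limit (at 0 within S)" "z \<in> S"
  shows "u z = 0"
proof -
  have dpsi: "((\<lambda>y. u y * u y / y) has_real_derivative 0) (at y within S)" if y: "y \<in> S" for y
  proof -
    have y0: "y \<noteq> 0" using y S by auto
    have d1: "((\<lambda>y. u y * u y / y) has_real_derivative ((u' y * u y + u y * u' y) * y - u y * u y * 1) / (y * y)) (at y)"
      by (rule derivative_eq_intros D refl | simp add: y0)+
    have e1: "((u' y * u y + u y * u' y) * y - u y * u y * 1) / (y * y) = (u y * (2 * y * u' y) - u y * u y) / (y * y)"
      by (simp add: algebra_simps)
    have e2: "(u y * (2 * y * u' y) - u y * u y) / (y * y) = 0"
      using E[OF y0] by simp
    from d1 have "((\<lambda>y. u y * u y / y) has_real_derivative 0) (at y)" unfolding e1 e2 .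
    then show ?thesis by (rule has_field_derivative_at_within)
  qed
  obtain c where c: "\<And>y. y \<in> S \<Longrightarrow> u y * u y / y = c"
    using has_field_derivative_zero_constant[OF S(1) dpsi] by blast
  have "((\<lambda>y. (u y - u 0) / (y - 0)) \<longlongrightarrow> u' 0) (at 0)"
    using D[of 0] by (simp add: has_field_derivative_iff)
  then have "((\<lambda>y. y * ((u y - u 0) / (y - 0)) * ((u y - u 0) / (y - 0))) \<longlongrightarrow> 0 * u' 0 * u' 0) (at 0)"
    by (intro tendsto_mult tendsto_ident_at)
  then have "((\<lambda>y. y * ((u y - u 0) / (y - 0)) * ((u y - u 0) / (y - 0))) \<longlongrightarrow> 0) (at 0)"
    by (simp only: mult_zero_left)
  then have lim: "((\<lambda>y. y * ((u y - u 0) / (y - 0)) * ((u y - u 0) / (y - 0))) \<longlongrightarrow> 0) (at 0 within S)"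
    by (rule Lim_at_imp_Lim_at_within)
  have ev: "eventually (\<lambda>y. y * ((u y - u 0) / (y - 0)) * ((u y - u 0) / (y - 0)) = c) (at 0 within S)"
    unfolding eventually_at_filter
  proof (rule always_eventually, intro allI impI)
    fix y :: real assume "y \<noteq> 0" "y \<in> S"
    then show "y * ((u y - u 0) / (y - 0)) * ((u y - u 0) / (y - 0)) = c"
      using c[of y] u0 by (simp add: field_simps power2_eq_square)
  qed
  have "((\<lambda>y. c) \<longlongrightarrow> 0) (at 0 within S)"
    using tendsto_cong[OF ev] lim by simp
  then have "c = 0" using S(3) tendsto_const tendsto_unique by blast
  then have "u z * u z / z = 0" using c S by simp
  moreover have "z \<noteq> 0" using S by auto
  ultimately show ?thesis by simp
qed

lemma ode_zero:
  fixes u u' :: "real \<Rightarrow> real"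
  assumes D: "\<And>z. (u has_real_derivative u' z) (at z)"
    and E: "\<And>z. z \<noteq> 0 \<Longrightarrow> 2 * z * u' z = u z"
    and u0: "u 0 = 0"
  shows "u z = 0"
proof -
  consider "z > 0" | "z < 0" | "z = 0" by linarith
  then show ?thesis
  proof cases
    case 1 then show ?thesis
      by (intro ode_aux[OF D E u0, of "{0<..}"]) auto
  next
    case 2 then show ?thesis
      by (intro ode_aux[OF D E u0, of "{..<0}"]) auto
  qed (use u0 in simp)
qed




lemma cvx_Ioi: "convex {0::real<..}" by (simp add: convex_real_interval)

lemma line_tuple: "((a::real, b::real, c::real) + s *\<^sub>R (d, e, f)) = (a + s * d, b + s * e, c + s * f)"
  by simp

lemma r_indep:
  fixes \<phi> :: "real \<times> real \<times> real \<Rightarrow> real"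
  assumes D: "\<And>q. q \<in> config_space \<Longrightarrow> (\<phi> has_derivative D\<phi> q) (at q)"
    and Z: "\<And>r \<theta> z. r > 0 \<Longrightarrow> D\<phi> (r,\<theta>,z) (1,0,0) = 0"
    and r: "r > 0"
  shows "\<phi> (r,\<theta>,z) = \<phi> (1,\<theta>,z)"
proof -
  have "((\<lambda>s. \<phi> (s,\<theta>,z)) has_real_derivative 0) (at s within {0<..})" if s: "s \<in> {0<..}" for s
  proof -
    have "((\<lambda>s. \<phi> ((0,\<theta>,z) + s *\<^sub>R (1,0,0))) has_real_derivative D\<phi> ((0,\<theta>,z) + s *\<^sub>R (1,0,0)) (1,0,0)) (at s)"
      by (rule line_deriv, rule D) (use s in \<open>simp add: config_space_def\<close>)
    then have "((\<lambda>s. \<phi> (s,\<theta>,z)) has_real_derivative 0) (at s)" using Z s by simp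
    then show ?thesis by (rule has_field_derivative_at_within)
  qed
  from has_field_derivative_zero_constant[OF cvx_Ioi this] obtain c where
    "\<And>s. s \<in> {0<..} \<Longrightarrow> \<phi> (s,\<theta>,z) = c" by blast
  then show ?thesis using r by force
qed

lemma d_indep:
  fixes \<phi> :: "real \<times> real \<times> real \<Rightarrow> real"
  assumes D: "\<And>q. q \<in> config_space \<Longrightarrow> (\<phi> has_derivative D\<phi> q) (at q)"
    and E: "\<And>r \<theta> z. r > 0 \<Longrightarrow> \<phi> (r,\<theta>,z) = \<phi> (1,\<theta>,z)"
    and r: "r > 0"
  shows "D\<phi> (r,\<theta>,z) (0,a,b) = D\<phi> (1,\<theta>,z) (0,a,b)"
proof -
  have d1: "((\<lambda>s. \<phi> ((r,\<theta>,z) + s *\<^sub>R (0,a,b))) has_real_derivative D\<phi> ((r,\<theta>,z) + 0 *\<^sub>R (0,a,b)) (0,a,b)) (at 0)"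
    by (rule line_deriv, rule D) (use r in \<open>simp add: config_space_def\<close>)
  have d2: "((\<lambda>s. \<phi> ((1,\<theta>,z) + s *\<^sub>R (0,a,b))) has_real_derivative D\<phi> ((1,\<theta>,z) + 0 *\<^sub>R (0,a,b)) (0,a,b)) (at 0)"
    by (rule line_deriv, rule D) (simp add: config_space_def)
  have eq: "(\<lambda>s. \<phi> ((r,\<theta>,z) + s *\<^sub>R (0,a,b))) = (\<lambda>s. \<phi> ((1,\<theta>,z) + s *\<^sub>R (0,a,b)))"
  proof
    fix s
    show "\<phi> ((r,\<theta>,z) + s *\<^sub>R (0,a,b)) = \<phi> ((1,\<theta>,z) + s *\<^sub>R (0,a,b))"
      using E[OF r, of "\<theta> + s * a" "z + s * b"] by simp
  qed
  from d1 d2 show ?thesis unfolding eq by (simp add: DERIV_unique)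
qed



theorem proposition3:
  fixes k :: real
    and f g h :: "real \<times> real \<times> real \<Rightarrow> real"
  assumes "k > 0"
    and "smooth_on config_space f"
    and "smooth_on config_space g"
    and "smooth_on config_space h"
    and "first_integral k (linear_in_momenta f g h)"
  shows "\<exists>c. \<forall>s\<in>phase_space. linear_in_momenta f g h s = c"
proof -
  note kpos = assms(1) and fi = assms(5)
  obtain Df where Df: "\<And>q. q \<in> config_space \<Longrightarrow> (f has_derivative Df q) (at q)"
    using smooth_deriv[OF assms(2)] by blast
  obtain Dg where Dg: "\<And>q. q \<in> config_space \<Longrightarrow> (g has_derivative Dg q) (at q)"
    using smooth_deriv[OF assms(3)] by blast
  obtain Dh where Dh: "\<And>q. q \<in> config_space \<Longrightarrow> (h has_derivative Dh q) (at q)"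
    using smooth_deriv[OF assms(4)] by blast
  have cfg: "(r,\<theta>,z) \<in> config_space" if "r > 0" for r \<theta> z using that by (simp add: config_space_def)
  have PDE: "r * f (r,\<theta>,z) + 4 * z * g (r,\<theta>,z) = 0 \<and> Df (r,\<theta>,z) (1,0,0) = 0 \<and> Dh (r,\<theta>,z) (1,0,0) = 0
      \<and> Dh (r,\<theta>,z) (0,1,0) / r\<^sup>2 + Dh (r,\<theta>,z) (0,0,1) / 2 = 0
      \<and> Df (r,\<theta>,z) (0,1,0) / r\<^sup>2 + Df (r,\<theta>,z) (0,0,1) / 2 + Dg (r,\<theta>,z) (1,0,0) = 0"
    if r: "r > 0" for r \<theta> z
  proof -
    define q where "q = (r,\<theta>,z)"
    have q: "q \<in> config_space" using cfg[OF r] by (simp add: q_def)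
    have lf: "linear (Df q)" using Df[OF q] by (rule has_derivative_linear)
    have lg: "linear (Dg q)" using Dg[OF q] by (rule has_derivative_linear)
    have lh: "linear (Dh q)" using Dh[OF q] by (rule has_derivative_linear)
    define Q where "Q = (r ^ 4 + 16 * z\<^sup>2) powr (3/2)"
    have Qp: "Q > 0" using W_pos_aux[OF r, of z] by (simp add: Q_def add_pos_nonneg)
    have E: "(x * Df q (1,0,0) + (y/r\<^sup>2) * Df q (0,1,0) + (y/2) * Df q (0,0,1)) * x + f q * (y\<^sup>2/r^3 - 2*k*r^3/Q)
      + ((x * Dg q (1,0,0) + (y/r\<^sup>2) * Dg q (0,1,0) + (y/2) * Dg q (0,0,1)) * y + g q * (- 8*k*r\<^sup>2*z/Q))
      + (x * Dh q (1,0,0) + (y/r\<^sup>2) * Dh q (0,1,0) + (y/2) * Dh q (0,0,1)) = 0" for x y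
    proof -
      have p: "(r,\<theta>,z,x,y) \<in> phase_space" using r by (simp add: phase_space_def)
      have "Df (prj (r,\<theta>,z,x,y)) (prj (heis_field k (r,\<theta>,z,x,y))) * fst (snd (snd (snd (r,\<theta>,z,x,y))))
         + f (prj (r,\<theta>,z,x,y)) * fst (snd (snd (snd (heis_field k (r,\<theta>,z,x,y)))))
         + (Dg (prj (r,\<theta>,z,x,y)) (prj (heis_field k (r,\<theta>,z,x,y))) * snd (snd (snd (snd (r,\<theta>,z,x,y))))
            + g (prj (r,\<theta>,z,x,y)) * snd (snd (snd (snd (heis_field k (r,\<theta>,z,x,y))))))
         + Dh (prj (r,\<theta>,z,x,y)) (prj (heis_field k (r,\<theta>,z,x,y))) = 0"
        by (rule key_identity[OF fi Df Dg Dh p])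
      then have "Df q (x, y/r\<^sup>2, y/2) * x + f q * (y\<^sup>2/r^3 - 2*k*r^3/Q)
         + (Dg q (x, y/r\<^sup>2, y/2) * y + g q * (- 8*k*r\<^sup>2*z/Q)) + Dh q (x, y/r\<^sup>2, y/2) = 0"
        by (simp add: prj_def heis_field_def q_def Q_def)
      then show ?thesis
        by (simp only: lin3[OF lf, of x "y/r\<^sup>2" "y/2"] lin3[OF lg, of x "y/r\<^sup>2" "y/2"] lin3[OF lh, of x "y/r\<^sup>2" "y/2"])
    qed
    note PE = poly_extract[OF E kpos r Qp]
    show ?thesis using PE by (simp add: q_def)
  qed
  have P2: "Df (r,\<theta>,z) (1,0,0) = 0" if "r > 0" for r \<theta> z
    using PDE[OF that] by blast
  have P3: "Dh (r,\<theta>,z) (1,0,0) = 0" if "r > 0" for r \<theta> z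
    using PDE[OF that] by blast
  have f_ind: "f (r,\<theta>,z) = f (1,\<theta>,z)" if "r > 0" for r \<theta> z
    by (rule r_indep[OF Df P2 that])
  have h_ind: "h (r,\<theta>,z) = h (1,\<theta>,z)" if "r > 0" for r \<theta> z
    by (rule r_indep[OF Dh P3 that])
  have Df_ind: "Df (r,\<theta>,z) (0,a,b) = Df (1,\<theta>,z) (0,a,b)" if "r > 0" for r \<theta> z a b
    by (rule d_indep[OF Df f_ind that])
  have gr: "Dg (r,\<theta>,z) (1,0,0) = - f (1,\<theta>,z) / (4 * z)" if r: "r > 0" and z: "z \<noteq> 0" for r \<theta> z
  proof -
    have d1: "((\<lambda>s. g ((0,\<theta>,z) + s *\<^sub>R (1,0,0))) has_real_derivative Dg ((0,\<theta>,z) + r *\<^sub>R (1,0,0)) (1,0,0)) (at r)"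
      by (rule line_deriv, rule Dg) (use r in \<open>simp add: config_space_def\<close>)
    have d2: "((\<lambda>s. s * (- f (1,\<theta>,z) / (4 * z))) has_real_derivative - f (1,\<theta>,z) / (4 * z)) (at r)"
      by (rule derivative_eq_intros refl)+ simp
    have eqg: "s * (- f (1,\<theta>,z) / (4 * z)) = g ((0,\<theta>,z) + s *\<^sub>R (1,0,0))" if s: "s \<in> {0<..}" for s
    proof -
      have "s * f (s,\<theta>,z) + 4 * z * g (s,\<theta>,z) = 0" using PDE[of s] s by simp
      then have "s * f (1,\<theta>,z) + 4 * z * g (s,\<theta>,z) = 0" using f_ind[of s] s by simp
      then show ?thesis using z by (simp add: field_simps)
    qed
    have "((\<lambda>s. g ((0,\<theta>,z) + s *\<^sub>R (1,0,0))) has_real_derivative - f (1,\<theta>,z) / (4 * z)) (at r)"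
      by (rule has_field_derivative_transform_within_open[OF d2, of "{0<..}"]) (use r eqg in auto)
    with d1 show ?thesis using DERIV_unique by simp
  qed
  have ode: "2 * z * Df (1,\<theta>,z) (0,0,1) = f (1,\<theta>,z)" if z: "z \<noteq> 0" for \<theta> z
  proof -
    have P1: "Df (1,\<theta>,z) (0,1,0) / 1\<^sup>2 + Df (1,\<theta>,z) (0,0,1) / 2 + Dg (1,\<theta>,z) (1,0,0) = 0"
      using PDE[of 1 \<theta> z] by simp
    have P2: "Df (2,\<theta>,z) (0,1,0) / 2\<^sup>2 + Df (2,\<theta>,z) (0,0,1) / 2 + Dg (2,\<theta>,z) (1,0,0) = 0"
      using PDE[of 2 \<theta> z] by simp
    have "Df (2,\<theta>,z) (0,1,0) = Df (1,\<theta>,z) (0,1,0)" using Df_ind[of 2] by simp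
    moreover have "Df (2,\<theta>,z) (0,0,1) = Df (1,\<theta>,z) (0,0,1)" using Df_ind[of 2] by simp
    moreover have "Dg (1,\<theta>,z) (1,0,0) = - f (1,\<theta>,z) / (4 * z)" using gr z by simp
    moreover have "Dg (2,\<theta>,z) (1,0,0) = - f (1,\<theta>,z) / (4 * z)" using gr z by simp
    ultimately have "Df (1,\<theta>,z) (0,0,1) / 2 - f (1,\<theta>,z) / (4 * z) = 0" using P1 P2 by simp
    then show ?thesis using z by (simp add: field_simps)
  qed
  have f0: "f (r,\<theta>,z) = 0" if r: "r > 0" for r \<theta> z
  proof -
    have D: "((\<lambda>s. f (1,\<theta>,s)) has_real_derivative Df (1,\<theta>,s) (0,0,1)) (at s)" for s
    proof -
      have "((\<lambda>s. f ((1,\<theta>,0) + s *\<^sub>R (0,0,1))) has_real_derivative Df ((1,\<theta>,0) + s *\<^sub>R (0,0,1)) (0,0,1)) (at s)"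
        by (rule line_deriv, rule Df) (simp add: config_space_def)
      then show ?thesis by simp
    qed
    have u0: "f (1,\<theta>,0) = 0" using PDE[of 1 \<theta> 0] by simp
    have "f (1,\<theta>,z) = 0"
      by (rule ode_zero[where u="\<lambda>s. f (1,\<theta>,s)" and u'="\<lambda>s. Df (1,\<theta>,s) (0,0,1)", OF D ode u0])
    then show ?thesis using f_ind[OF r] by simp
  qed
  have gnz: "g (r,\<theta>,z) = 0" if r: "r > 0" and z: "z \<noteq> 0" for r \<theta> z
    using PDE[OF r, of \<theta> z] f0[OF r, of \<theta> z] z by simp
  have g0: "g (r,\<theta>,z) = 0" if r: "r > 0" for r \<theta> z
  proof (cases "z = 0")
    case False
    then show ?thesis using PDE[OF r, of \<theta> z] f0[OF r] by simp
  next
    case True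
    have "((\<lambda>s. g ((r,\<theta>,0) + s *\<^sub>R (0,0,1))) has_real_derivative Dg ((r,\<theta>,0) + 0 *\<^sub>R (0,0,1)) (0,0,1)) (at 0)"
      by (rule line_deriv, rule Dg) (use r in \<open>simp add: config_space_def\<close>)
    then have "continuous (at 0) (\<lambda>s. g (r,\<theta>,s))" using DERIV_continuous by fastforce
    then have lim: "((\<lambda>s. g (r,\<theta>,s)) \<longlongrightarrow> g (r,\<theta>,0)) (at 0)" by (simp add: isCont_def)
    have ev: "eventually (\<lambda>s. g (r,\<theta>,s) = 0) (at (0::real))"
      unfolding eventually_at_filter
      by (rule always_eventually) (auto simp: gnz[OF r])
    have "((\<lambda>s. 0) \<longlongrightarrow> g (r,\<theta>,0)) (at (0::real))"
      using tendsto_cong[OF ev] lim by simp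
    then have "g (r,\<theta>,0) = 0" using tendsto_unique[OF trivial_limit_at] tendsto_const by blast
    then show ?thesis using True by simp
  qed
  have hline: "h (r, \<theta> + s / r\<^sup>2, z + s / 2) = h (r,\<theta>,z)" if r: "r > 0" for r \<theta> z s
  proof -
    have "((\<lambda>s. h ((r,\<theta>,z) + s *\<^sub>R (0, 1/r\<^sup>2, 1/2))) has_real_derivative 0) (at t)" for t
    proof -
      define q where "q = (r,\<theta>,z) + t *\<^sub>R (0, 1/r\<^sup>2, 1/2)"
      have q: "q = (r, \<theta> + t / r\<^sup>2, z + t / 2)" by (simp add: q_def)
      have qc: "q \<in> config_space" using r by (simp add: q config_space_def)
      have d: "((\<lambda>s. h ((r,\<theta>,z) + s *\<^sub>R (0, 1/r\<^sup>2, 1/2))) has_real_derivative Dh q (0, 1/r\<^sup>2, 1/2)) (at t)"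
        unfolding q_def by (rule line_deriv, rule Dh) (use qc in \<open>simp add: q_def\<close>)
      have lh: "linear (Dh q)" using Dh[OF qc] by (rule has_derivative_linear)
      have "Dh q (0, 1/r\<^sup>2, 1/2) = Dh q (0,1,0) / r\<^sup>2 + Dh q (0,0,1) / 2"
        using lin3[OF lh, of 0 "1/r\<^sup>2" "1/2"] by simp
      also have "\<dots> = 0" using PDE[OF r, of "\<theta> + t / r\<^sup>2" "z + t / 2"] by (simp add: q)
      finally show ?thesis using d by simp
    qed
    then have "h ((r,\<theta>,z) + s *\<^sub>R (0, 1/r\<^sup>2, 1/2)) = h ((r,\<theta>,z) + 0 *\<^sub>R (0, 1/r\<^sup>2, 1/2))"
      by (intro DERIV_isconst_all) blast
    then show ?thesis by simp
  qed
  define H where "H \<theta> z = h (1,\<theta>,z)" for \<theta> z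
  have H1: "H (\<theta> + s) (z + s / 2) = H \<theta> z" for \<theta> z s
    using hline[where r=1 and \<theta>=\<theta> and z=z and s=s] by (simp add: H_def)
  have H2: "H (\<theta> + s / 4) (z + s / 2) = H \<theta> z" for \<theta> z s
    using hline[where r=2 and \<theta>=\<theta> and z=z and s=s] h_ind[of 2] by (simp add: H_def)
  have Hth: "H x w = H y w" for x y w
  proof -
    define s where "s = 4 * (x - y) / 3"
    have "H ((y - s/4) + s) ((w - s/2) + s / 2) = H (y - s/4) (w - s/2)" by (rule H1)
    moreover have "H ((y - s/4) + s / 4) ((w - s/2) + s / 2) = H (y - s/4) (w - s/2)" by (rule H2)
    moreover have "(y - s/4) + s = x" by (simp add: s_def field_simps)
    ultimately show ?thesis by simp
  qed
  have Hc: "H \<theta> z = H 0 0" for \<theta> z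
  proof -
    have "H (0 + 2 * z) (0 + 2 * z / 2) = H 0 0" by (rule H1)
    then have "H (2 * z) z = H 0 0" by simp
    then show ?thesis using Hth[of \<theta> z "2 * z"] by simp
  qed
  show ?thesis
  proof (intro exI[of _ "H 0 0"] ballI)
    fix s assume s: "s \<in> phase_space"
    obtain r \<theta> z pR pS where sd: "s = (r,\<theta>,z,pR,pS)" by (cases s) auto
    have r: "r > 0" using s sd by (simp add: phase_space_def)
    have "linear_in_momenta f g h s = h (r,\<theta>,z)"
      using f0[OF r] g0[OF r] by (simp add: sd linear_in_momenta_def)
    also have "\<dots> = H \<theta> z" using h_ind[OF r] by (simp add: H_def)
    also have "\<dots> = H 0 0" by (rule Hc)
    finally show "linear_in_momenta f g h s = H 0 0" .
  qed
qed


end
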